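(* Let $\Bbbk$ be an algebraically closed field and $A$ a local finite dimensional $\Bbbk$-algebra. Then $\operatorname{HHdim} T(A)=\infty$.
   Context: $T(A)=A\ltimes DA$ is the trivial extension: the vector space $A\oplus DA$, where $DA=\operatorname{Hom}_\Bbbk(A,\Bbbk)$ with its natural bimodule structure, with multiplication $(a,f)(b,g)=(ab,ag+fb)$. For a finite dimensional algebra $B$, $\operatorname{HH}_n(B)=\operatorname{Tor}^{B\otimes_\Bbbk B^{\mathrm{op}}}_n(B,B)$ is the $n$-th Hochschild homology group, and $\operatorname{HHdim}B=\sup\{n\mid \operatorname{HH}_n(B)\neq 0\}$. *)

theory Defs
  imports "HOL-Computational_Algebra.Polynomial"
begin

text \<open>A finite dimensional algebra over a field 'k is presented by a basis indexed by a
finite type 'i and structure constants c, meaning e_i * e_j = sum_l c i j l e_l.\<close>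

definition amul :: "('i::finite \<Rightarrow> 'i \<Rightarrow> 'i \<Rightarrow> 'k::field) \<Rightarrow> ('i \<Rightarrow> 'k) \<Rightarrow> ('i \<Rightarrow> 'k) \<Rightarrow> ('i \<Rightarrow> 'k)" where
  "amul c x y = (\<lambda>l. \<Sum>i\<in>UNIV. \<Sum>j\<in>UNIV. x i * y j * c i j l)"

definition is_unit_elem :: "('i::finite \<Rightarrow> 'i \<Rightarrow> 'i \<Rightarrow> 'k::field) \<Rightarrow> ('i \<Rightarrow> 'k) \<Rightarrow> bool" where
  "is_unit_elem c u \<longleftrightarrow> (\<forall>x. amul c u x = x \<and> amul c x u = x)"

definition fd_algebra :: "('i::finite \<Rightarrow> 'i \<Rightarrow> 'i \<Rightarrow> 'k::field) \<Rightarrow> bool" where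
  "fd_algebra c \<longleftrightarrow> (\<forall>x y z. amul c (amul c x y) z = amul c x (amul c y z))
                     \<and> (\<exists>u. is_unit_elem c u)"

definition invertible_elem :: "('i::finite \<Rightarrow> 'i \<Rightarrow> 'i \<Rightarrow> 'k::field) \<Rightarrow> ('i \<Rightarrow> 'k) \<Rightarrow> bool" where
  "invertible_elem c x \<longleftrightarrow> (\<exists>u y. is_unit_elem c u \<and> amul c x y = u \<and> amul c y x = u)"

text \<open>Local ring: nonzero, and the non-invertible elements are closed under addition
(equivalently: they form the unique maximal (two-sided) ideal).\<close>
definition local_algebra :: "('i::finite \<Rightarrow> 'i \<Rightarrow> 'i \<Rightarrow> 'k::field) \<Rightarrow> bool" where
  "local_algebra c \<longleftrightarrow> fd_algebra c \<and> (\<forall>u. is_unit_elem c u \<longrightarrow> u \<noteq> (\<lambda>_. 0))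
     \<and> (\<forall>x y. \<not> invertible_elem c x \<longrightarrow> \<not> invertible_elem c y \<longrightarrow> \<not> invertible_elem c (\<lambda>i. x i + y i))"

text \<open>Trivial extension T(A) = A \<ltimes> DA. Basis: Inl i = e_i of A, Inr j = dual basis e_j^* of DA.
(a,f)(b,g) = (ab, ag + fb) with (a g)(x) = g(x a), (f b)(x) = f(b x). Hence
e_i e_j^* = sum_m c m i j e_m^*, e_j^* e_i = sum_m c i m j e_m^*, e^* e^* = 0.\<close>
fun triv_ext :: "('i::finite \<Rightarrow> 'i \<Rightarrow> 'i \<Rightarrow> 'k::field) \<Rightarrow> ('i + 'i) \<Rightarrow> ('i + 'i) \<Rightarrow> ('i + 'i) \<Rightarrow> 'k" where
  "triv_ext c (Inl i) (Inl j) (Inl l) = c i j l"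
| "triv_ext c (Inl i) (Inl j) (Inr l) = 0"
| "triv_ext c (Inl i) (Inr j) (Inr m) = c m i j"
| "triv_ext c (Inl i) (Inr j) (Inl m) = 0"
| "triv_ext c (Inr j) (Inl i) (Inr m) = c i m j"
| "triv_ext c (Inr j) (Inl i) (Inl m) = 0"
| "triv_ext c (Inr j) (Inr i) l = 0"

text \<open>Hochschild complex: C_n(B) = B^{\<otimes>(n+1)}, with coordinates w.r.t. basis tensors
e_{w_0} \<otimes> ... \<otimes> e_{w_n} indexed by lists w of length n+1.\<close>
definition hchains :: "nat \<Rightarrow> ('i list \<Rightarrow> 'k::field) set" where
  "hchains n = {x. \<forall>w. length w \<noteq> n + 1 \<longrightarrow> x w = 0}"

text \<open>Coefficient of basis tensor v in b_n(e_w), for w of length n+1: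
b(a_0\<otimes>..\<otimes>a_n) = sum_{i<n} (-1)^i a_0\<otimes>..\<otimes>a_i a_{i+1}\<otimes>..\<otimes>a_n
                 + (-1)^n a_n a_0 \<otimes> a_1 \<otimes> .. \<otimes> a_{n-1}.\<close>
definition hbd_coeff :: "('i::finite \<Rightarrow> 'i \<Rightarrow> 'i \<Rightarrow> 'k::field) \<Rightarrow> nat \<Rightarrow> 'i list \<Rightarrow> 'i list \<Rightarrow> 'k" where
  "hbd_coeff c n w v =
     (\<Sum>i<n. (-1) ^ i * (\<Sum>l\<in>UNIV. if v = take i w @ [l] @ drop (i + 2) w
                                     then c (w ! i) (w ! (i + 1)) l else 0))
   + (-1) ^ n * (\<Sum>l\<in>UNIV. if v = l # take (n - 1) (drop 1 w) then c (w ! n) (w ! 0) l else 0)"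

definition hbd :: "('i::finite \<Rightarrow> 'i \<Rightarrow> 'i \<Rightarrow> 'k::field) \<Rightarrow> nat \<Rightarrow> ('i list \<Rightarrow> 'k) \<Rightarrow> ('i list \<Rightarrow> 'k)" where
  "hbd c n x = (\<lambda>v. if length v = n then
        (\<Sum>w\<in>{w. length w = n + 1}. x w * hbd_coeff c n w v) else 0)"

definition HH_nonzero :: "('i::finite \<Rightarrow> 'i \<Rightarrow> 'i \<Rightarrow> 'k::field) \<Rightarrow> nat \<Rightarrow> bool" where
  "HH_nonzero c n \<longleftrightarrow> (\<exists>z \<in> hchains n. (n = 0 \<or> hbd c n z = (\<lambda>_. 0))
        \<and> \<not> (\<exists>y \<in> hchains (Suc n). hbd c (Suc n) y = z))"

definition HHdim_infinite :: "('i::finite \<Rightarrow> 'i \<Rightarrow> 'i \<Rightarrow> 'k::field) \<Rightarrow> bool" where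
  "HHdim_infinite c \<longleftrightarrow> (\<forall>N. \<exists>n\<ge>N. HH_nonzero c n)"

end

theory Submission
  imports Defs "HOL-Library.Function_Algebras" "Jordan_Normal_Form.Char_Poly"
begin


definition sc :: "'k::field \<Rightarrow> ('i \<Rightarrow> 'k) \<Rightarrow> ('i \<Rightarrow> 'k)" where "sc a f = (\<lambda>i. a * f i)"

interpretation vs: vector_space "sc :: 'k::field \<Rightarrow> ('i \<Rightarrow> 'k) \<Rightarrow> ('i \<Rightarrow> 'k)"
  by unfold_locales (auto simp: sc_def fun_eq_iff algebra_simps)

definition dl :: "'i \<Rightarrow> 'i \<Rightarrow> 'k::field" where "dl j = (\<lambda>i. if i = j then 1 else 0)"

lemma sum_fun_app: "(sum g A) i = sum (\<lambda>j. g j i) A"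
  by (induct A rule: infinite_finite_induct) auto

lemma inj_dl: "inj dl"
proof
  fix a b :: 'a assume "dl a = (dl b :: 'a \<Rightarrow> 'b::field)"
  hence "dl a a = (dl b a :: 'b)" by simp
  thus "a = b" by (simp add: dl_def split: if_splits)
qed

lemma sum_dl: "(\<Sum>j\<in>UNIV. sc (f j) (dl j)) = (f :: 'i::finite \<Rightarrow> 'k::field)"
proof
  fix i
  have "(\<Sum>j\<in>UNIV. sc (f j) (dl j)) i = (\<Sum>j\<in>UNIV. f j * dl j i)"
    by (simp add: sum_fun_app sc_def)
  also have "\<dots> = (\<Sum>j\<in>UNIV. if i = j then f j else 0)"
    by (rule sum.cong) (auto simp: dl_def)
  also have "\<dots> = f i" by simp
  finally show "(\<Sum>j\<in>UNIV. sc (f j) (dl j)) i = f i" .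
qed

interpretation fv: finite_dimensional_vector_space "sc :: 'k::field \<Rightarrow> ('i::finite \<Rightarrow> 'k) \<Rightarrow> ('i \<Rightarrow> 'k)" "range dl"
proof unfold_locales
  show "finite (range (dl :: 'i \<Rightarrow> 'i \<Rightarrow> 'k))" by simp
  show "vs.independent (range (dl :: 'i \<Rightarrow> 'i \<Rightarrow> 'k))"
  proof (rule vs.independent_if_scalars_zero)
    show "finite (range (dl :: 'i \<Rightarrow> 'i \<Rightarrow> 'k))" by simp
    fix u :: "('i \<Rightarrow> 'k) \<Rightarrow> 'k" and v
    assume h: "(\<Sum>v\<in>range dl. sc (u v) v) = 0" and v: "v \<in> range (dl :: 'i \<Rightarrow> 'i \<Rightarrow> 'k)"
    then obtain j where vj: "v = dl j" by auto
    have "(\<Sum>v\<in>range dl. sc (u v) v) = (\<Sum>j\<in>UNIV. sc (u (dl j)) (dl j :: 'i \<Rightarrow> 'k))"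
      by (simp add: sum.reindex inj_dl)
    hence "(\<Sum>j\<in>UNIV. sc (u (dl j)) (dl j :: 'i \<Rightarrow> 'k)) = 0" using h by simp
    hence "(\<Sum>j\<in>UNIV. sc (u (dl j)) (dl j :: 'i \<Rightarrow> 'k)) j = 0" by simp
    hence "u (dl j) = 0" by (simp add: sum_fun_app sc_def dl_def if_distrib sum.delta' cong: if_cong)
    thus "u v = 0" using vj by simp
  qed
  show "vs.span (range (dl :: 'i \<Rightarrow> 'i \<Rightarrow> 'k)) = UNIV"
  proof -
    have "f \<in> vs.span (range dl)" for f :: "'i \<Rightarrow> 'k"
    proof -
      have "(\<Sum>j\<in>UNIV. sc (f j) (dl j)) \<in> vs.span (range dl)"
        by (intro vs.span_sum vs.span_scale vs.span_base) auto
      thus "f \<in> vs.span (range dl)" by (simp add: sum_dl)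
    qed
    thus ?thesis by auto
  qed
qed

lemma amul_add_left: "amul c (x + y) z = amul c x z + amul c y z"
  by (simp add: amul_def fun_eq_iff algebra_simps sum.distrib)
lemma amul_add_right: "amul c x (y + z) = amul c x y + amul c x z"
  by (simp add: amul_def fun_eq_iff algebra_simps sum.distrib)
lemma amul_sc_left: "amul c (sc a x) y = sc a (amul c x y)"
  by (simp add: amul_def fun_eq_iff sc_def sum_distrib_left algebra_simps)
lemma amul_sc_right: "amul c x (sc a y) = sc a (amul c x y)"
  by (simp add: amul_def fun_eq_iff sc_def sum_distrib_left algebra_simps)
lemma amul_zero_left[simp]: "amul c 0 y = 0"
  by (simp add: amul_def fun_eq_iff)
lemma amul_zero_right[simp]: "amul c x 0 = 0"
  by (simp add: amul_def fun_eq_iff)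
lemma amul_diff_left: "amul c (x - y) z = amul c x z - amul c y z"
  by (simp add: amul_def fun_eq_iff algebra_simps sum_subtractf)
lemma amul_diff_right: "amul c x (y - z) = amul c x y - amul c x z"
  by (simp add: amul_def fun_eq_iff algebra_simps sum_subtractf)

lemma linear_amul: "Vector_Spaces.linear sc sc (amul c x)"
  unfolding Vector_Spaces.linear_iff
  using vs.vector_space_axioms by (simp add: amul_add_right amul_sc_right)


definition copp :: "('i \<Rightarrow> 'i \<Rightarrow> 'i \<Rightarrow> 'k) \<Rightarrow> 'i \<Rightarrow> 'i \<Rightarrow> 'i \<Rightarrow> 'k" where
  "copp c = (\<lambda>i j l. c j i l)"

lemma amul_copp: "amul (copp c) x y = amul c y x"
  unfolding amul_def copp_def fun_eq_iff
  by (subst sum.swap) (simp add: mult_ac)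

lemma unit_copp: "is_unit_elem (copp c) u \<longleftrightarrow> is_unit_elem c u"
  by (auto simp: is_unit_elem_def amul_copp)

lemma inv_copp: "invertible_elem (copp c) x \<longleftrightarrow> invertible_elem c x"
  by (auto simp: invertible_elem_def amul_copp unit_copp)

lemma local_copp: "local_algebra c \<Longrightarrow> local_algebra (copp c)"
  unfolding local_algebra_def fd_algebra_def
  by (simp add: amul_copp unit_copp inv_copp) (blast intro: unit_copp[THEN iffD2])

locale localalg =
  fixes c :: "'i::finite \<Rightarrow> 'i \<Rightarrow> 'i \<Rightarrow> 'k::field"
  assumes loc: "local_algebra c"
begin

lemma fd: "fd_algebra c" using loc by (simp add: local_algebra_def)
lemma assoc: "amul c (amul c x y) z = amul c x (amul c y z)"
  using fd by (simp add: fd_algebra_def)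

definition u where "u = (SOME u. is_unit_elem c u)"
lemma unit: "is_unit_elem c u"
proof -
  from fd obtain v where "is_unit_elem c v" by (auto simp: fd_algebra_def)
  thus ?thesis unfolding u_def by (rule someI[where P="is_unit_elem c"])
qed
lemma ul[simp]: "amul c u x = x" and ur[simp]: "amul c x u = x"
  using unit by (auto simp: is_unit_elem_def)
lemma unit_eq: "is_unit_elem c v \<Longrightarrow> v = u"
proof -
  assume "is_unit_elem c v"
  hence "amul c v u = u" unfolding is_unit_elem_def by blast
  moreover have "amul c v u = v" by (rule ur)
  ultimately show "v = u" by simp
qed
lemma u_nz: "u \<noteq> 0"
proof -
  have "\<forall>u. is_unit_elem c u \<longrightarrow> u \<noteq> (\<lambda>_. 0)" using loc unfolding local_algebra_def by blast
  hence "u \<noteq> (\<lambda>_. 0)" using unit by blast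
  thus ?thesis by (simp add: zero_fun_def)
qed
lemma inv_iff: "invertible_elem c x \<longleftrightarrow> (\<exists>y. amul c x y = u \<and> amul c y x = u)"
proof
  assume "invertible_elem c x"
  then obtain v y where v: "is_unit_elem c v" "amul c x y = v" "amul c y x = v"
    unfolding invertible_elem_def by blast
  from unit_eq[OF v(1)] v(2,3) show "\<exists>y. amul c x y = u \<and> amul c y x = u" by blast
next
  assume "\<exists>y. amul c x y = u \<and> amul c y x = u"
  thus "invertible_elem c x" using unit unfolding invertible_elem_def by blast
qed

definition "mm = {x. \<not> invertible_elem c x}"

lemma u_not_mm: "u \<notin> mm"
  unfolding mm_def inv_iff using ul[of u] by blast
lemma zero_mm: "0 \<in> mm"
  unfolding mm_def inv_iff using u_nz by auto
lemma add_mm: "x \<in> mm \<Longrightarrow> y \<in> mm \<Longrightarrow> x + y \<in> mm"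
  using loc by (simp add: local_algebra_def mm_def plus_fun_def)
lemma sc_mm: "x \<in> mm \<Longrightarrow> sc a x \<in> mm"
proof -
  assume x: "x \<in> mm"
  show "sc a x \<in> mm"
  proof (rule ccontr)
    assume "sc a x \<notin> mm"
    then obtain y where y: "amul c (sc a x) y = u" "amul c y (sc a x) = u"
      unfolding mm_def inv_iff by auto
    have "amul c x (sc a y) = u" using y(1) by (simp add: amul_sc_left amul_sc_right)
    moreover have "amul c (sc a y) x = u" using y(2) by (simp add: amul_sc_left amul_sc_right)
    ultimately show False using x unfolding mm_def inv_iff by auto
  qed
qed

lemma onesided: "amul c x r = u \<Longrightarrow> amul c r x = u"
proof -
  assume h: "amul c x r = u"
  have "amul c x \<circ> amul c r = id"
    by (auto simp: fun_eq_iff assoc[symmetric] h)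
  hence "amul c r \<circ> amul c x = id"
    using fv.linear_inverse_left[OF linear_amul linear_amul] by blast
  hence "(amul c r \<circ> amul c x) u = id u" by simp
  hence "amul c r (amul c x u) = u" by simp
  thus ?thesis by simp
qed

lemma mulL_mm: "x \<in> mm \<Longrightarrow> amul c a x \<in> mm"
proof -
  assume x: "x \<in> mm"
  show "amul c a x \<in> mm"
  proof (rule ccontr)
    assume "amul c a x \<notin> mm"
    then obtain y where y: "amul c y (amul c a x) = u"
      unfolding mm_def inv_iff by auto
    hence l: "amul c (amul c y a) x = u" by (simp add: assoc)
    hence "amul c x (amul c y a) = u" by (rule onesided)
    thus False using x l unfolding mm_def inv_iff by auto
  qed
qed

lemma mulR_mm: "x \<in> mm \<Longrightarrow> amul c x a \<in> mm"
proof -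
  assume x: "x \<in> mm"
  show "amul c x a \<in> mm"
  proof (rule ccontr)
    assume "amul c x a \<notin> mm"
    then obtain y where y: "amul c (amul c x a) y = u"
      unfolding mm_def inv_iff by auto
    hence l: "amul c x (amul c a y) = u" by (simp add: assoc)
    hence "amul c (amul c a y) x = u" by (rule onesided)
    thus False using x l unfolding mm_def inv_iff by auto
  qed
qed

lemma u_minus: "x \<in> mm \<Longrightarrow> u - x \<notin> mm"
proof
  assume "x \<in> mm" "u - x \<in> mm"
  hence "x + (u - x) \<in> mm" by (rule add_mm)
  thus False using u_not_mm by simp
qed

lemma claimL:
  assumes "vs.subspace K" "y0 \<in> K" "y0 \<noteq> 0" "\<forall>x\<in>mm. \<forall>y\<in>K. amul c x y \<in> K"
  shows "\<exists>y\<in>K. y \<noteq> 0 \<and> (\<forall>x\<in>mm. amul c x y = 0)"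
  using assms
proof (induction "vs.dim K" arbitrary: K y0 rule: less_induct)
  case less
  show ?case
  proof (cases "\<forall>x\<in>mm. amul c x y0 = 0")
    case True then show ?thesis using less.prems by blast
  next
    case False
    then obtain x0 where x0: "x0 \<in> mm" "amul c x0 y0 \<noteq> 0" by blast
    define K' where "K' = (\<lambda>x. amul c x y0) ` mm"
    have sub: "vs.subspace K'"
      unfolding vs.subspace_def K'_def
    proof (intro conjI ballI allI)
      show "0 \<in> (\<lambda>x. amul c x y0) ` mm" using zero_mm by force
    next
      fix a b assume "a \<in> (\<lambda>x. amul c x y0) ` mm" "b \<in> (\<lambda>x. amul c x y0) ` mm"
      then obtain xa xb where "xa \<in> mm" "xb \<in> mm" "a = amul c xa y0" "b = amul c xb y0" by auto
      thus "a + b \<in> (\<lambda>x. amul c x y0) ` mm"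
        using add_mm by (auto simp: amul_add_left[symmetric])
    next
      fix k a assume "a \<in> (\<lambda>x. amul c x y0) ` mm"
      then obtain xa where "xa \<in> mm" "a = amul c xa y0" by auto
      thus "sc k a \<in> (\<lambda>x. amul c x y0) ` mm"
        using sc_mm by (auto simp: amul_sc_left[symmetric])
    qed
    have KK: "K' \<subseteq> K" using less.prems(2,4) unfolding K'_def by auto
    have clos: "\<forall>x\<in>mm. \<forall>y\<in>K'. amul c x y \<in> K'"
      unfolding K'_def using mulL_mm by (auto simp: assoc[symmetric])
    have ne: "K' \<noteq> K"
    proof
      assume "K' = K"
      hence "y0 \<in> K'" using less.prems(2) by simp
      then obtain x where x: "x \<in> mm" "y0 = amul c x y0" unfolding K'_def by auto
      have z: "amul c (u - x) y0 = 0" using x(2) by (simp add: amul_diff_left)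
      from u_minus[OF x(1)] obtain w where "amul c w (u - x) = u"
        unfolding mm_def inv_iff by auto
      hence "y0 = amul c w (amul c (u - x) y0)" by (simp add: assoc[symmetric])
      thus False using z less.prems(3) by simp
    qed
    have "vs.span K' \<subset> vs.span K"
      using KK ne sub less.prems(1) by (simp add: vs.span_eq_iff[THEN iffD2])
    hence dlt: "vs.dim K' < vs.dim K" by (rule fv.dim_psubset)
    have "amul c x0 y0 \<in> K'" unfolding K'_def using x0 by auto
    from less.hyps[OF dlt sub this x0(2) clos] KK show ?thesis by blast
  qed
qed

end


lemma dl_sum: "(\<Sum>a\<in>UNIV. dl (i::'i::finite) a * f a) = (f i :: 'k::field)"
proof -
  have "(\<Sum>a\<in>UNIV. dl i a * f a) = (\<Sum>a\<in>UNIV. if a = i then f a else 0)"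
    by (rule sum.cong) (auto simp: dl_def)
  also have "\<dots> = f i" by simp
  finally show ?thesis .
qed

lemma M3:
  fixes c :: "'i::finite \<Rightarrow> 'i \<Rightarrow> 'i \<Rightarrow> 'k::alg_closed_field"
  assumes "localalg c"
  shows "\<exists>k. a - sc k (localalg.u c) \<in> localalg.mm c"
proof -
  interpret localalg c by fact
  define n where "n = card (UNIV :: 'i set)"
  have n0: "n > 0" unfolding n_def by (simp add: finite_UNIV_card_ge_0)
  obtain e where e: "bij_betw e {0..<n} (UNIV::'i set)"
    using ex_bij_betw_nat_finite[of "UNIV::'i set"] unfolding n_def by auto
  define A where "A = mat n n (\<lambda>(r,q). \<Sum>i\<in>UNIV. a i * c i (e q) (e r))"
  have A: "A \<in> carrier_mat n n" unfolding A_def by simp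
  have "degree (char_poly A) > 0" using degree_monic_char_poly[OF A] n0 by simp
  then obtain k where "poly (char_poly A) k = 0" using alg_closed_imp_poly_has_root by blast
  hence "eigenvalue A k" using eigenvalue_root_char_poly[OF A] by simp
  then obtain v where v: "v \<in> carrier_vec n" "v \<noteq> 0\<^sub>v n" "A *\<^sub>v v = k \<cdot>\<^sub>v v"
    unfolding eigenvalue_def eigenvector_def using A by auto
  define ei where "ei = the_inv_into {0..<n} e"
  define y where "y = (\<lambda>j. v $ (ei j))"
  have yq: "y (e q) = v $ q" if "q < n" for q
    unfolding y_def ei_def using that e by (simp add: bij_betw_def the_inv_into_f_f)
  have ay: "amul c a y = sc k y"
  proof
    fix l
    have "l \<in> e ` {0..<n}" using e by (simp add: bij_betw_def)
    then obtain r where r: "r < n" "l = e r" by auto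
    have "(A *\<^sub>v v) $ r = (\<Sum>q\<in>{0..<n}. (\<Sum>i\<in>UNIV. a i * c i (e q) l) * v $ q)"
      using r v(1) unfolding A_def by (simp add: scalar_prod_def)
    also have "\<dots> = (\<Sum>q\<in>{0..<n}. (\<lambda>j. (\<Sum>i\<in>UNIV. a i * c i j l) * y j) (e q))"
      using yq by (intro sum.cong) auto
    also have "\<dots> = (\<Sum>j\<in>UNIV. (\<Sum>i\<in>UNIV. a i * c i j l) * y j)"
      by (rule sum.reindex_bij_betw[OF e])
    also have "\<dots> = (\<Sum>j\<in>UNIV. \<Sum>i\<in>UNIV. a i * y j * c i j l)"
      by (simp add: sum_distrib_right sum_distrib_left mult_ac)
    also have "\<dots> = amul c a y l"
      unfolding amul_def by (rule sum.swap)
    finally have "amul c a y l = (A *\<^sub>v v) $ r" ..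
    also have "\<dots> = k * v $ r" using v(3) r v(1) by simp
    also have "\<dots> = k * y l" using yq r by simp
    finally show "amul c a y l = sc k y l" by (simp add: sc_def)
  qed
  have y0: "y \<noteq> 0"
  proof
    assume y0: "y = 0"
    have "v = 0\<^sub>v n"
    proof (rule eq_vecI)
      fix q assume "q < dim_vec (0\<^sub>v n :: 'k vec)"
      hence q: "q < n" by simp
      have "v $ q = y (e q)" using yq[OF q] by simp
      also have "\<dots> = 0" using y0 by simp
      finally show "v $ q = 0\<^sub>v n $ q" using q by simp
    qed (use v(1) in simp)
    thus False using v(2) by simp
  qed
  have z: "amul c (a - sc k u) y = 0" by (simp add: amul_diff_left amul_sc_left ay)
  have "a - sc k u \<in> mm"
    unfolding mm_def inv_iff
  proof (rule CollectI, rule notI)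
    assume "\<exists>w. amul c (a - sc k u) w = u \<and> amul c w (a - sc k u) = u"
    then obtain w where w: "amul c w (a - sc k u) = u" by blast
    have "y = amul c (amul c w (a - sc k u)) y" using w by simp
    also have "\<dots> = 0" using z by (simp add: assoc)
    finally show False using y0 by simp
  qed
  thus ?thesis by blast
qed

lemma partA:
  fixes c :: "'i::finite \<Rightarrow> 'i \<Rightarrow> 'i \<Rightarrow> 'k::alg_closed_field"
  assumes loc: "local_algebra c"
  shows "\<exists>s h j0. s j0 \<noteq> 0 \<and> (\<forall>i j. (\<Sum>m\<in>UNIV. c i m j * s m) = h i * s j)
                 \<and> (\<forall>i j. (\<Sum>m\<in>UNIV. c m i j * s m) = h i * s j)"
proof -
  interpret L: localalg c by unfold_locales (rule loc)
  interpret R: localalg "copp c" by unfold_locales (rule local_copp[OF loc])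
  have mR: "R.mm = L.mm" unfolding R.mm_def L.mm_def by (simp add: inv_copp)
  have "\<exists>y\<in>UNIV. y \<noteq> 0 \<and> (\<forall>x\<in>L.mm. amul c x y = 0)"
    by (rule L.claimL[of UNIV L.u]) (auto simp: L.u_nz)
  then obtain y1 where y1: "y1 \<noteq> 0" "\<forall>x\<in>L.mm. amul c x y1 = 0" by blast
  define K1 where "K1 = {y. \<forall>x\<in>L.mm. amul c x y = 0}"
  have sc0: "sc k (0::'i\<Rightarrow>'k) = 0" for k by (simp add: sc_def zero_fun_def)
  have sub: "vs.subspace K1"
  proof (rule vs.subspaceI)
    show "0 \<in> K1" unfolding K1_def by simp
  next
    fix x y assume "x \<in> K1" "y \<in> K1"
    thus "x + y \<in> K1" unfolding K1_def by (simp add: amul_add_right)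
  next
    fix k x assume "x \<in> K1"
    thus "sc k x \<in> K1" unfolding K1_def by (simp add: amul_sc_right sc0)
  qed
  have clos: "\<forall>x\<in>R.mm. \<forall>y\<in>K1. amul (copp c) x y \<in> K1"
    unfolding mR K1_def by (simp add: amul_copp L.assoc[symmetric])
  have "y1 \<in> K1" using y1 unfolding K1_def by simp
  from R.claimL[OF sub this y1(1) clos] obtain s where
    s: "s \<in> K1" "s \<noteq> 0" "\<forall>x\<in>R.mm. amul (copp c) x s = 0" by blast
  have sL: "amul c x s = 0" if "x \<in> L.mm" for x using s(1) that unfolding K1_def by simp
  have sR: "amul c s x = 0" if "x \<in> L.mm" for x using s(3) that unfolding mR by (simp add: amul_copp)
  have "\<forall>i. \<exists>k. dl i - sc k L.u \<in> L.mm"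
    using M3[OF L.localalg_axioms] by blast
  then obtain h where h: "\<And>i. dl i - sc (h i) L.u \<in> L.mm" by metis
  have e1: "amul c (dl i) s = sc (h i) s" for i
  proof -
    have "amul c (dl i) s = amul c (dl i - sc (h i) L.u) s + amul c (sc (h i) L.u) s"
      by (simp add: amul_add_left[symmetric])
    also have "\<dots> = sc (h i) s" using sL[OF h] by (simp add: amul_sc_left)
    finally show ?thesis .
  qed
  have e2: "amul c s (dl i) = sc (h i) s" for i
  proof -
    have "amul c s (dl i) = amul c s (dl i - sc (h i) L.u) + amul c s (sc (h i) L.u)"
      by (simp add: amul_add_right[symmetric])
    also have "\<dots> = sc (h i) s" using sR[OF h] by (simp add: amul_sc_right)
    finally show ?thesis .
  qed
  have F1: "(\<Sum>m\<in>UNIV. c i m j * s m) = h i * s j" for i j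
  proof -
    have "amul c (dl i) s j = (\<Sum>a\<in>UNIV. dl i a * (\<Sum>b\<in>UNIV. s b * c a b j))"
      unfolding amul_def by (simp add: sum_distrib_left mult_ac)
    also have "\<dots> = (\<Sum>m\<in>UNIV. c i m j * s m)" by (simp add: dl_sum mult_ac)
    finally show ?thesis using e1[of i] by (simp add: sc_def fun_eq_iff)
  qed
  have F2: "(\<Sum>m\<in>UNIV. c m i j * s m) = h i * s j" for i j
  proof -
    have "amul c s (dl i) j = (\<Sum>a\<in>UNIV. s a * (\<Sum>b\<in>UNIV. dl i b * c a b j))"
      unfolding amul_def by (simp add: sum_distrib_left mult_ac)
    also have "\<dots> = (\<Sum>m\<in>UNIV. c m i j * s m)" by (simp add: dl_sum mult_ac)
    finally show ?thesis using e2[of i] by (simp add: sc_def fun_eq_iff)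
  qed
  from s(2) obtain j0 where "s j0 \<noteq> 0" by (auto simp: fun_eq_iff)
  thus ?thesis using F1 F2 by blast
qed



fun lam :: "('i \<Rightarrow> 'k::field) \<Rightarrow> ('i + 'i) \<Rightarrow> 'k" where
  "lam s (Inl i) = 0" | "lam s (Inr j) = s j"
fun alp :: "('i \<Rightarrow> 'k::field) \<Rightarrow> ('i + 'i) \<Rightarrow> 'k" where
  "alp h (Inl i) = h i" | "alp h (Inr j) = 0"

definition PL :: "('i \<Rightarrow> 'k::field) \<Rightarrow> ('i + 'i) list \<Rightarrow> 'k" where
  "PL s v = prod_list (map (lam s) v)"

lemma sum_UNIV_Plus:
  fixes g :: "('a::finite + 'b::finite) \<Rightarrow> 'k::comm_monoid_add"
  shows "(\<Sum>l\<in>UNIV. g l) = (\<Sum>i\<in>UNIV. g (Inl i)) + (\<Sum>j\<in>UNIV. g (Inr j))"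
  using sum.Plus[of "UNIV::'a set" "UNIV::'b set" g] by (simp add: comp_def)

lemma merge:
  fixes c :: "'i::finite \<Rightarrow> 'i \<Rightarrow> 'i \<Rightarrow> 'k::field"
  assumes F1: "\<And>i j. (\<Sum>m\<in>UNIV. c i m j * s m) = h i * s j"
      and F2: "\<And>i j. (\<Sum>m\<in>UNIV. c m i j * s m) = h i * s j"
  shows "(\<Sum>l\<in>UNIV. triv_ext c a b l * lam s l) = alp h a * lam s b + lam s a * alp h b"
proof -
  have G1: "(\<Sum>m\<in>UNIV. s m * c i m j) = h i * s j" for i j
    using F1[of i j] by (simp add: mult.commute)
  have G2: "(\<Sum>m\<in>UNIV. s m * c m i j) = h i * s j" for i j
    using F2[of i j] by (simp add: mult.commute)
  show ?thesis
    by (cases a; cases b) (simp_all add: sum_UNIV_Plus G1 G2 mult.commute)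
qed

lemma sum_delta_gen:
  assumes "finite V" "\<And>l. F l \<in> V" "finite L"
  shows "(\<Sum>v\<in>V. (\<Sum>l\<in>L. (if v = F l then G l else 0)) * (P v :: 'k::comm_ring_1))
       = (\<Sum>l\<in>L. G l * P (F l))"
proof -
  have "(\<Sum>v\<in>V. (\<Sum>l\<in>L. (if v = F l then G l else 0)) * P v)
      = (\<Sum>v\<in>V. \<Sum>l\<in>L. (if v = F l then G l * P v else 0))"
    by (auto simp: sum_distrib_right intro!: sum.cong)
  also have "\<dots> = (\<Sum>l\<in>L. \<Sum>v\<in>V. (if v = F l then G l * P v else 0))"
    by (rule sum.swap)
  also have "\<dots> = (\<Sum>l\<in>L. G l * P (F l))"
    using assms by (simp add: sum.delta)
  finally show ?thesis .
qed

lemma tele: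
  fixes Q :: "nat \<Rightarrow> 'k::comm_ring_1"
  shows "(\<Sum>i<Suc n. (-1)^i * (Q i + Q (Suc i))) = Q 0 + (-1)^n * Q (Suc n)"
  by (induction n) (auto simp: algebra_simps)

lemma PL_append[simp]: "PL s (xs @ ys) = PL s xs * PL s ys"
  by (simp add: PL_def)
lemma PL_Cons[simp]: "PL s (x # ys) = lam s x * PL s ys"
  by (simp add: PL_def)
lemma PL_Nil[simp]: "PL s [] = 1"
  by (simp add: PL_def)

lemma inner_eq:
  fixes c :: "'i::finite \<Rightarrow> 'i \<Rightarrow> 'i \<Rightarrow> 'k::field"
  assumes F1: "\<And>i j. (\<Sum>m\<in>UNIV. c i m j * s m) = h i * s j"
      and F2: "\<And>i j. (\<Sum>m\<in>UNIV. c m i j * s m) = h i * s j"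
      and len: "length w = Suc (Suc n)" and i: "i < Suc n"
  shows "(\<Sum>l\<in>UNIV. triv_ext c (w ! i) (w ! (i + 1)) l * PL s (take i w @ [l] @ drop (i + 2) w))
     = PL s (take i w) * alp h (w!i) * PL s (drop (Suc i) w)
       + PL s (take (Suc i) w) * alp h (w!(Suc i)) * PL s (drop (Suc (Suc i)) w)"
proof -
  have "(\<Sum>l\<in>UNIV. triv_ext c (w ! i) (w ! (i + 1)) l * PL s (take i w @ [l] @ drop (i + 2) w))
      = PL s (take i w) * (\<Sum>l\<in>UNIV. triv_ext c (w ! i) (w ! (i + 1)) l * lam s l) * PL s (drop (i + 2) w)"
    by (simp add: sum_distrib_left sum_distrib_right algebra_simps)
  also have "\<dots> = PL s (take i w) * (alp h (w!i) * lam s (w!(i+1)) + lam s (w!i) * alp h (w!(i+1))) * PL s (drop (i + 2) w)"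
    using merge[OF F1 F2] by simp
  also have "\<dots> = PL s (take i w) * alp h (w!i) * PL s (drop (Suc i) w)
       + PL s (take (Suc i) w) * alp h (w!(Suc i)) * PL s (drop (Suc (Suc i)) w)"
  proof -
    have d: "drop (Suc i) w = w!(i+1) # drop (i+2) w" using len i
      by (simp add: Cons_nth_drop_Suc)
    have tk: "take (Suc i) w = take i w @ [w!i]" using len i
      by (simp add: take_Suc_conv_app_nth)
    show ?thesis by (simp add: d tk algebra_simps)
  qed
  finally show ?thesis .
qed


lemma key:
  fixes c :: "'i::finite \<Rightarrow> 'i \<Rightarrow> 'i \<Rightarrow> 'k::field"
  assumes F1: "\<And>i j. (\<Sum>m\<in>UNIV. c i m j * s m) = h i * s j"
      and F2: "\<And>i j. (\<Sum>m\<in>UNIV. c m i j * s m) = h i * s j"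
      and len: "length w = Suc (Suc n)" and ev: "even n"
  shows "(\<Sum>v\<in>{v. length v = Suc n}. hbd_coeff (triv_ext c) (Suc n) w v * PL s v) = 0"
proof -
  define V where "V = {v::('i+'i) list. length v = Suc n}"
  have fV: "finite V" unfolding V_def using finite_lists_length_eq[of "UNIV::('i+'i) set" "Suc n"] by simp
  define Q where "Q p = PL s (take p w) * alp h (w!p) * PL s (drop (Suc p) w)" for p
  define T where "T = triv_ext c"
  have A: "(\<Sum>v\<in>V. (\<Sum>i<Suc n. (-1) ^ i * (\<Sum>l\<in>UNIV. if v = take i w @ [l] @ drop (i + 2) w
                                     then T (w ! i) (w ! (i + 1)) l else 0)) * PL s v)
        = (\<Sum>i<Suc n. (-1)^i * (Q i + Q (Suc i)))"
  proof -
    have "(\<Sum>v\<in>V. (\<Sum>i<Suc n. (-1) ^ i * (\<Sum>l\<in>UNIV. if v = take i w @ [l] @ drop (i + 2) w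
                                     then T (w ! i) (w ! (i + 1)) l else 0)) * PL s v)
       = (\<Sum>i<Suc n. (-1) ^ i * (\<Sum>v\<in>V. (\<Sum>l\<in>UNIV. if v = take i w @ [l] @ drop (i + 2) w
                                     then T (w ! i) (w ! (i + 1)) l else 0) * PL s v))"
    proof -
      define X where "X i v = (\<Sum>l\<in>UNIV. if v = take i w @ [l] @ drop (i + 2) w
                                     then T (w ! i) (w ! (i + 1)) l else 0)" for i v
      have "(\<Sum>v\<in>V. (\<Sum>i<Suc n. (-1) ^ i * X i v) * PL s v)
           = (\<Sum>v\<in>V. \<Sum>i<Suc n. (-1) ^ i * (X i v * PL s v))"
        by (simp only: sum_distrib_right mult.assoc)
      also have "\<dots> = (\<Sum>i<Suc n. \<Sum>v\<in>V. (-1) ^ i * (X i v * PL s v))"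
        by (rule sum.swap)
      also have "\<dots> = (\<Sum>i<Suc n. (-1) ^ i * (\<Sum>v\<in>V. X i v * PL s v))"
        by (simp only: sum_distrib_left)
      finally show ?thesis unfolding X_def .
    qed
    also have "\<dots> = (\<Sum>i<Suc n. (-1)^i * (Q i + Q (Suc i)))"
    proof (rule sum.cong[OF refl])
      fix i assume "i \<in> {..<Suc n}"
      hence i: "i < Suc n" by simp
      have "(\<Sum>v\<in>V. (\<Sum>l\<in>UNIV. if v = take i w @ [l] @ drop (i + 2) w
                                     then T (w ! i) (w ! (i + 1)) l else 0) * PL s v)
          = (\<Sum>l\<in>UNIV. T (w ! i) (w ! (i + 1)) l * PL s (take i w @ [l] @ drop (i + 2) w))"
        by (rule sum_delta_gen[OF fV]) (use len i in \<open>auto simp: V_def\<close>)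
      also have "\<dots> = Q i + Q (Suc i)"
        unfolding T_def Q_def by (rule inner_eq[OF F1 F2 len i])
      finally show "(-1) ^ i * (\<Sum>v\<in>V. (\<Sum>l\<in>UNIV. if v = take i w @ [l] @ drop (i + 2) w
                                     then T (w ! i) (w ! (i + 1)) l else 0) * PL s v) = (-1)^i * (Q i + Q (Suc i))"
        by simp
    qed
    finally show ?thesis .
  qed
  have B: "(\<Sum>v\<in>V. ((-1) ^ Suc n * (\<Sum>l\<in>UNIV. if v = l # take (Suc n - 1) (drop 1 w) then T (w ! Suc n) (w ! 0) l else 0)) * PL s v)
        = (-1) ^ Suc n * (Q (Suc n) + Q 0)"
  proof -
    have "(\<Sum>v\<in>V. ((-1) ^ Suc n * (\<Sum>l\<in>UNIV. if v = l # take (Suc n - 1) (drop 1 w) then T (w ! Suc n) (w ! 0) l else 0)) * PL s v)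
       = (-1) ^ Suc n * (\<Sum>v\<in>V. (\<Sum>l\<in>UNIV. if v = l # take n (drop 1 w) then T (w ! Suc n) (w ! 0) l else 0) * PL s v)"
    proof -
      define Y where "Y v = (\<Sum>l\<in>UNIV. if v = l # take n (drop 1 w) then T (w ! Suc n) (w ! 0) l else 0)" for v
      have "(\<Sum>v\<in>V. ((-1) ^ Suc n * Y v) * PL s v) = (-1) ^ Suc n * (\<Sum>v\<in>V. Y v * PL s v)"
        by (simp only: sum_distrib_left mult.assoc)
      moreover have "Suc n - 1 = n" by simp
      ultimately show ?thesis unfolding Y_def by simp
    qed
    also have "(\<Sum>v\<in>V. (\<Sum>l\<in>UNIV. if v = l # take n (drop 1 w) then T (w ! Suc n) (w ! 0) l else 0) * PL s v)
        = (\<Sum>l\<in>UNIV. T (w ! Suc n) (w ! 0) l * PL s (l # take n (drop 1 w)))"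
      by (rule sum_delta_gen[OF fV]) (use len in \<open>auto simp: V_def\<close>)
    also have "\<dots> = (\<Sum>l\<in>UNIV. T (w ! Suc n) (w ! 0) l * lam s l) * PL s (take n (drop 1 w))"
      by (simp add: sum_distrib_right sum_distrib_left mult_ac)
    also have "\<dots> = (alp h (w ! Suc n) * lam s (w!0) + lam s (w ! Suc n) * alp h (w!0)) * PL s (take n (drop 1 w))"
      unfolding T_def using merge[OF F1 F2] by simp
    also have "\<dots> = Q (Suc n) + Q 0"
    proof -
      obtain a w' where w: "w = a # w'" using len by (cases w) auto
      have lw': "length w' = Suc n" using len w by simp
      have w'eq: "w' = take n w' @ [w' ! n]"
        using lw' by (metis lessI take_Suc_conv_app_nth take_all order_refl)
      have t1: "take (Suc n) w = a # take n w'" using w by simp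
      have d1: "drop (Suc (Suc n)) w = []" using len by simp
      have d2: "drop 1 w = take n w' @ [w' ! n]" using w w'eq by simp
      have PLw': "PL s w' = PL s (take n w') * lam s (w'!n)"
        by (subst (1) w'eq) simp
      show ?thesis unfolding Q_def
        by (simp only: t1 d1) (simp add: w PLw' algebra_simps)
    qed
    finally show ?thesis by simp
  qed
  have "(\<Sum>v\<in>{v. length v = Suc n}. hbd_coeff (triv_ext c) (Suc n) w v * PL s v)
     = (\<Sum>i<Suc n. (-1)^i * (Q i + Q (Suc i))) + (-1) ^ Suc n * (Q (Suc n) + Q 0)"
    unfolding hbd_coeff_def V_def[symmetric] T_def[symmetric]
    by (simp only: distrib_right sum.distrib A B)
  also have "\<dots> = Q 0 + (-1)^n * Q (Suc n) + (-1) ^ Suc n * (Q (Suc n) + Q 0)"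
    by (simp only: tele)
  also have "\<dots> = 0" using ev by (simp add: algebra_simps)
  finally show ?thesis .
qed


lemma finite_len: "finite {v::('a::finite) list. length v = n}"
  using finite_lists_length_eq[of "UNIV::'a set" n] by simp

lemma sum_ind:
  assumes "finite A" "r \<in> A"
  shows "(\<Sum>w\<in>A. (if w = r then (1::'k::comm_ring_1) else 0) * f w) = f r"
proof -
  have "(\<Sum>w\<in>A. (if w = r then (1::'k) else 0) * f w) = (\<Sum>w\<in>A. if w = r then f w else 0)"
    by (rule sum.cong) auto
  also have "\<dots> = f r" using assms by (simp add: sum.delta')
  finally show ?thesis .
qed

lemma partB:
  fixes c :: "'i::finite \<Rightarrow> 'i \<Rightarrow> 'i \<Rightarrow> 'k::field"
  assumes F1: "\<And>i j. (\<Sum>m\<in>UNIV. c i m j * s m) = h i * s j"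
      and F2: "\<And>i j. (\<Sum>m\<in>UNIV. c m i j * s m) = h i * s j"
      and s0: "s j0 \<noteq> 0"
  shows "HHdim_infinite (triv_ext c)"
  unfolding HHdim_infinite_def
proof
  fix N :: nat
  define n where "n = 2 * N"
  have ev: "even n" unfolding n_def by simp
  define T where "T = triv_ext c"
  define r where "r = replicate (Suc n) (Inr j0 :: 'i + 'i)"
  define z where "z = (\<lambda>w. if w = r then (1::'k) else 0)"
  have zch: "z \<in> hchains n" unfolding hchains_def z_def r_def by auto
  have hc0: "hbd_coeff T n r v = 0" for v
  proof -
    have a: "T (r ! i) (r ! (i + 1)) l = 0" if "i < n" for i l
      using that unfolding r_def T_def by (simp del: replicate_Suc add: nth_replicate)
    have b: "T (r ! n) (r ! 0) l = 0" for l
      unfolding r_def T_def by (simp del: replicate_Suc add: nth_replicate)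
    have s1: "(\<Sum>i<n. (-1) ^ i * (\<Sum>l\<in>UNIV. if v = take i r @ [l] @ drop (i + 2) r
                                     then T (r ! i) (r ! (i + 1)) l else 0)) = 0"
      by (rule sum.neutral) (auto intro!: sum.neutral simp: a[simplified])
    show ?thesis unfolding hbd_coeff_def s1 by (auto intro!: sum.neutral simp: b)
  qed
  have cyc: "hbd T n z = (\<lambda>_. 0)"
  proof
    fix v
    have "(\<Sum>w\<in>{w. length w = n + 1}. z w * hbd_coeff T n w v) = hbd_coeff T n r v"
      unfolding z_def by (rule sum_ind) (auto simp: finite_len r_def)
    thus "hbd T n z v = 0" unfolding hbd_def using hc0 by simp
  qed
  have nb: "\<not> (\<exists>y \<in> hchains (Suc n). hbd T (Suc n) y = z)"
  proof
    assume "\<exists>y \<in> hchains (Suc n). hbd T (Suc n) y = z"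
    then obtain y where hy: "hbd T (Suc n) y = z" by blast
    define V where "V = {v::('i+'i) list. length v = Suc n}"
    define W where "W = {v::('i+'i) list. length v = Suc (Suc n)}"
    have fV: "finite V" and fW: "finite W" unfolding V_def W_def by (simp_all add: finite_len)
    have "(\<Sum>v\<in>V. z v * PL s v) = PL s r"
      unfolding z_def by (rule sum_ind) (auto simp: r_def V_def finite_len)
    also have "\<dots> = s j0 ^ Suc n" unfolding r_def PL_def by simp
    finally have P1: "(\<Sum>v\<in>V. z v * PL s v) \<noteq> 0" using s0 by simp
    have "(\<Sum>v\<in>V. z v * PL s v) = (\<Sum>v\<in>V. (\<Sum>w\<in>W. y w * hbd_coeff T (Suc n) w v) * PL s v)"
      unfolding hy[symmetric] hbd_def V_def W_def by (intro sum.cong) auto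
    also have "\<dots> = (\<Sum>v\<in>V. \<Sum>w\<in>W. y w * (hbd_coeff T (Suc n) w v * PL s v))"
      by (simp add: sum_distrib_right mult.assoc)
    also have "\<dots> = (\<Sum>w\<in>W. \<Sum>v\<in>V. y w * (hbd_coeff T (Suc n) w v * PL s v))"
      by (rule sum.swap)
    also have "\<dots> = (\<Sum>w\<in>W. y w * (\<Sum>v\<in>V. hbd_coeff T (Suc n) w v * PL s v))"
      by (simp add: sum_distrib_left)
    also have "\<dots> = 0"
      by (rule sum.neutral) (use key[OF F1 F2 _ ev] in \<open>auto simp: W_def V_def T_def\<close>)
    finally show False using P1 by simp
  qed
  have "HH_nonzero (triv_ext c) n"
    unfolding HH_nonzero_def T_def[symmetric] using zch cyc nb by blast
  thus "\<exists>n\<ge>N. HH_nonzero (triv_ext c) n" using n_def by (intro exI[of _ n]) simp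
qed


theorem theorem3p2:
  fixes c :: "'i::finite \<Rightarrow> 'i \<Rightarrow> 'i \<Rightarrow> 'k::alg_closed_field"
  assumes "local_algebra c"
  shows "HHdim_infinite (triv_ext c)"
proof -
  obtain s h j0 where s: "s j0 \<noteq> 0"
    and F1: "\<forall>i j. (\<Sum>m\<in>UNIV. c i m j * s m) = h i * s j"
    and F2: "\<forall>i j. (\<Sum>m\<in>UNIV. c m i j * s m) = h i * s j"
    using partA[OF assms] by blast
  show ?thesis by (rule partB[of c s h j0]) (use F1 F2 s in auto)
qed

end
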